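(* Let $\phi\in[\tfrac{\pi}{2},\pi]$ and $C_\phi=\mathrm{diag}(1,1,1,e^{i\phi})$. Define $$b=\arccos\!\Big(\frac{\frac{1}{\sqrt2}-\cos^2\frac{\phi}{2}}{\sin^2\frac{\phi}{2}}\Big),\quad p=\sqrt{\tfrac12\Big(1+\tfrac{\sqrt2-1}{\tan(\phi/2)}\Big)},\quad q=\sqrt{\tfrac12\Big(1-\tfrac{\sqrt2-1}{\tan(\phi/2)}\Big)}$$ (with $\tfrac{\sqrt2-1}{\tan(\pi/2)}:=0$), and $U_1=\begin{pmatrix} ip & iq\\ -q & p\end{pmatrix}$, $U_2=\begin{pmatrix} ip & -q\\ -iq & -p\end{pmatrix}$. Then $$e^{\frac{\pi}{4}\frac{i}{2}\sigma_z\otimes\sigma_z}=e^{-i\frac{\phi}{2}}\big(e^{i\frac{\phi}{4}\sigma_z}\otimes U_1e^{i\frac{\phi}{4}\sigma_z}\big)\,C_\phi\,\big(e^{i\frac{\phi}{4}\sigma_z}\otimes e^{\frac{i}{2}(b+\pi)\sigma_y}e^{i\frac{\phi}{4}\sigma_z}\big)\,C_\phi\,(I\otimes U_2).$$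
   Context: $\sigma_y,\sigma_z$ are Pauli matrices, $I$ the $2\times2$ identity; the basis is $|00\rangle,|01\rangle,|10\rangle,|11\rangle$ with the first tensor factor being the first qubit and $\sigma_z=\mathrm{diag}(1,-1)$. *)

theory Defs
  imports Complex_Main "Jordan_Normal_Form.Matrix"
begin

definition mexp :: "complex mat \<Rightarrow> complex mat" where
  "mexp A = mat (dim_row A) (dim_col A)
     (\<lambda>(i,j). (\<Sum>k. (A ^\<^sub>m k) $$ (i,j) / of_nat (fact k)))"

text \<open>Kronecker (tensor) product; the first factor is the first (most significant) qubit,
  so the basis order is 00, 01, 10, 11.\<close>
definition kron :: "complex mat \<Rightarrow> complex mat \<Rightarrow> complex mat" where
  "kron A B = mat (dim_row A * dim_row B) (dim_col A * dim_col B)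
     (\<lambda>(i,j). A $$ (i div dim_row B, j div dim_col B) * B $$ (i mod dim_row B, j mod dim_col B))"

definition sigma_y :: "complex mat" where
  "sigma_y = mat_of_rows_list 2 [[0, - \<i>], [\<i>, 0]]"

definition sigma_z :: "complex mat" where
  "sigma_z = mat_of_rows_list 2 [[1, 0], [0, -1]]"

definition Id2 :: "complex mat" where
  "Id2 = mat_of_rows_list 2 [[1, 0], [0, 1]]"

definition Cphi :: "real \<Rightarrow> complex mat" where
  "Cphi \<phi> = mat_of_rows_list 4
     [[1,0,0,0],[0,1,0,0],[0,0,1,0],[0,0,0,exp (\<i> * of_real \<phi>)]]"

text \<open>Parameters. Note: in Isabelle tan(pi/2) = 0 and x / 0 = 0, which realises the
  paper's convention (sqrt 2 - 1)/tan(pi/2) := 0; we make it explicit anyway.\<close>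
definition tq :: "real \<Rightarrow> real" where
  "tq \<phi> = (if \<phi> = pi then 0 else (sqrt 2 - 1) / tan (\<phi> / 2))"

definition bpar :: "real \<Rightarrow> real" where
  "bpar \<phi> = arccos ((1 / sqrt 2 - (cos (\<phi> / 2))\<^sup>2) / (sin (\<phi> / 2))\<^sup>2)"

definition ppar :: "real \<Rightarrow> real" where
  "ppar \<phi> = sqrt ((1 + tq \<phi>) / 2)"

definition qpar :: "real \<Rightarrow> real" where
  "qpar \<phi> = sqrt ((1 - tq \<phi>) / 2)"

definition U1 :: "real \<Rightarrow> complex mat" where
  "U1 \<phi> = mat_of_rows_list 2
     [[\<i> * of_real (ppar \<phi>), \<i> * of_real (qpar \<phi>)], [- of_real (qpar \<phi>), of_real (ppar \<phi>)]]"

definition U2 :: "real \<Rightarrow> complex mat" where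
  "U2 \<phi> = mat_of_rows_list 2
     [[\<i> * of_real (ppar \<phi>), - of_real (qpar \<phi>)], [- \<i> * of_real (qpar \<phi>), - of_real (ppar \<phi>)]]"

end

theory Submission
  imports Defs
begin

lemma exp_sums_c: "(\<lambda>k. x ^ k / of_nat (fact k)) sums exp (x::complex)"
proof -
  have "(\<lambda>n. x ^ n /\<^sub>R fact n) sums exp x" by (rule exp_converges)
  moreover have "\<And>n. x ^ n /\<^sub>R fact n = x ^ n / of_nat (fact n)"
    by (simp add: scaleR_conv_of_real divide_inverse mult.commute)
  ultimately show ?thesis by simp
qed

lemma pow_smult_invol:
  fixes A :: "complex mat"
  assumes A: "A \<in> carrier_mat n n" and AA: "A * A = 1\<^sub>m n"
  shows "(c \<cdot>\<^sub>m A) ^\<^sub>m k = (c ^ k) \<cdot>\<^sub>m (if even k then 1\<^sub>m n else A)"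
proof (induction k)
  case 0 then show ?case using A by auto
next
  case (Suc k)
  have "(c \<cdot>\<^sub>m A) ^\<^sub>m Suc k = (c ^ k) \<cdot>\<^sub>m (if even k then 1\<^sub>m n else A) * (c \<cdot>\<^sub>m A)"
    using Suc by simp
  also have "\<dots> = (c ^ Suc k) \<cdot>\<^sub>m ((if even k then 1\<^sub>m n else A) * A)"
  proof -
    let ?X = "(if even k then 1\<^sub>m n else A)"
    have X: "?X \<in> carrier_mat n n" using A by auto
    have cA: "c \<cdot>\<^sub>m A \<in> carrier_mat n n" using A by auto
    have "(c ^ k) \<cdot>\<^sub>m ?X * (c \<cdot>\<^sub>m A) = (c ^ k) \<cdot>\<^sub>m (?X * (c \<cdot>\<^sub>m A))"
      by (rule mult_smult_assoc_mat[OF X cA])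
    also have "?X * (c \<cdot>\<^sub>m A) = c \<cdot>\<^sub>m (?X * A)" by (rule mult_smult_distrib[OF X A])
    also have "(c ^ k) \<cdot>\<^sub>m (c \<cdot>\<^sub>m (?X * A)) = (c ^ Suc k) \<cdot>\<^sub>m (?X * A)"
      by (rule eq_matI) (auto simp: mult.commute)
    finally show ?thesis .
  qed
  also have "\<dots> = (c ^ Suc k) \<cdot>\<^sub>m (if even (Suc k) then 1\<^sub>m n else A)"
    using A AA by auto
  finally show ?case .
qed

lemma mexp_invol:
  fixes A :: "complex mat"
  assumes A: "A \<in> carrier_mat n n" and AA: "A * A = 1\<^sub>m n"
  shows "mexp (c \<cdot>\<^sub>m A) = mat n n (\<lambda>(i,j). ((exp c + exp (-c))/2) * (1\<^sub>m n)$$(i,j) + ((exp c - exp (-c))/2) * A$$(i,j))"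
proof (rule eq_matI)
  fix i j assume i: "i < dim_row (mat n n (\<lambda>(i,j). ((exp c + exp (-c))/2) * (1\<^sub>m n)$$(i,j) + ((exp c - exp (-c))/2) * A$$(i,j)))"
    and j: "j < dim_col (mat n n (\<lambda>(i,j). ((exp c + exp (-c))/2) * (1\<^sub>m n)$$(i,j) + ((exp c - exp (-c))/2) * A$$(i,j)))"
  let ?d = "(1\<^sub>m n :: complex mat)$$(i,j)" let ?a = "A$$(i,j)"
  have e: "((c \<cdot>\<^sub>m A) ^\<^sub>m k) $$ (i,j) / of_nat (fact k) =
     ((?d + ?a)/2) * (c ^ k / of_nat (fact k)) + ((?d - ?a)/2) * ((-c) ^ k / of_nat (fact k))" for k
    using i j A by (cases "even k") (auto simp: pow_smult_invol[OF A AA] field_simps)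
  have "(\<lambda>k. ((c \<cdot>\<^sub>m A) ^\<^sub>m k) $$ (i,j) / of_nat (fact k)) sums
      (((?d + ?a)/2) * exp c + ((?d - ?a)/2) * exp (-c))"
    unfolding e by (intro sums_add sums_mult exp_sums_c)
  then show "mexp (c \<cdot>\<^sub>m A) $$ (i, j) = mat n n (\<lambda>(i,j). ((exp c + exp (-c))/2) * (1\<^sub>m n)$$(i,j) + ((exp c - exp (-c))/2) * A$$(i,j)) $$ (i, j)"
    using i j A unfolding mexp_def by (auto simp: sums_iff field_simps)
qed (use A in \<open>auto simp: mexp_def\<close>)

lemma less2: "i < (2::nat) \<longleftrightarrow> i = 0 \<or> i = 1" by auto
lemma less4: "i < (4::nat) \<longleftrightarrow> i = 0 \<or> i = 1 \<or> i = 2 \<or> i = 3" by auto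

lemma mat2_eqI:
  assumes "A \<in> carrier_mat 2 2" "A $$ (0,0) = a" "A $$ (0,1) = b" "A $$ (1,0) = c" "A $$ (1,1) = d"
  shows "A = mat_of_rows_list 2 [[a,b],[c,d]]"
  by (rule eq_matI) (use assms in \<open>auto simp: mat_of_rows_list_def eval_nat_numeral less_Suc_eq\<close>)

lemma sigma_z_sq: "sigma_z * sigma_z = 1\<^sub>m 2"
  by (rule eq_matI) (auto simp: sigma_z_def mat_of_rows_list_def eval_nat_numeral less_Suc_eq scalar_prod_def)

lemma sigma_y_sq: "sigma_y * sigma_y = 1\<^sub>m 2"
  by (rule eq_matI) (auto simp: sigma_y_def mat_of_rows_list_def eval_nat_numeral less_Suc_eq scalar_prod_def)

lemma sigma_z_carrier: "sigma_z \<in> carrier_mat 2 2"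
  unfolding sigma_z_def mat_of_rows_list_def by (rule carrier_matI) simp_all
lemma sigma_y_carrier: "sigma_y \<in> carrier_mat 2 2"
  unfolding sigma_y_def mat_of_rows_list_def by (rule carrier_matI) simp_all

lemma Zexp: "mexp ((\<i> * of_real x) \<cdot>\<^sub>m sigma_z) = mat_of_rows_list 2 [[exp (\<i> * of_real x), 0],[0, exp (- (\<i> * of_real x))]]"
  apply (subst mexp_invol[OF sigma_z_carrier sigma_z_sq])
  apply (rule mat2_eqI)
  apply (auto simp: sigma_z_def mat_of_rows_list_def eval_nat_numeral less_Suc_eq field_simps)
  done


lemma less4': "i < (4::nat) \<Longrightarrow> i = 0 \<or> i = 1 \<or> i = 2 \<or> i = 3" by auto
lemma less2': "i < (2::nat) \<Longrightarrow> i = 0 \<or> i = 1" by auto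

lemma mult4: "mat_of_rows_list 4 [[a00,a01,a02,a03],[a10,a11,a12,a13],[a20,a21,a22,a23],[a30,a31,a32,a33]] * mat_of_rows_list 4 [[b00,b01,b02,b03],[b10,b11,b12,b13],[b20,b21,b22,b23],[b30,b31,b32,b33]] = mat_of_rows_list 4 [[(a00*b00 + a01*b10 + a02*b20 + a03*b30),(a00*b01 + a01*b11 + a02*b21 + a03*b31),(a00*b02 + a01*b12 + a02*b22 + a03*b32),(a00*b03 + a01*b13 + a02*b23 + a03*b33)],[(a10*b00 + a11*b10 + a12*b20 + a13*b30),(a10*b01 + a11*b11 + a12*b21 + a13*b31),(a10*b02 + a11*b12 + a12*b22 + a13*b32),(a10*b03 + a11*b13 + a12*b23 + a13*b33)],[(a20*b00 + a21*b10 + a22*b20 + a23*b30),(a20*b01 + a21*b11 + a22*b21 + a23*b31),(a20*b02 + a21*b12 + a22*b22 + a23*b32),(a20*b03 + a21*b13 + a22*b23 + a23*b33)],[(a30*b00 + a31*b10 + a32*b20 + a33*b30),(a30*b01 + a31*b11 + a32*b21 + a33*b31),(a30*b02 + a31*b12 + a32*b22 + a33*b32),(a30*b03 + a31*b13 + a32*b23 + a33*b33)]]"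
  by (rule eq_matI) (auto simp: mat_of_rows_list_def scalar_prod_def eval_nat_numeral less_Suc_eq)

lemma mult2: "mat_of_rows_list 2 [[a00,a01],[a10,a11]] * mat_of_rows_list 2 [[b00,b01],[b10,b11]] = mat_of_rows_list 2 [[(a00*b00 + a01*b10),(a00*b01 + a01*b11)],[(a10*b00 + a11*b10),(a10*b01 + a11*b11)]]"
  by (rule eq_matI) (auto simp: mat_of_rows_list_def scalar_prod_def eval_nat_numeral less_Suc_eq)

lemma smult4: "g \<cdot>\<^sub>m mat_of_rows_list 4 [[a00,a01,a02,a03],[a10,a11,a12,a13],[a20,a21,a22,a23],[a30,a31,a32,a33]] = mat_of_rows_list 4 [[g*a00,g*a01,g*a02,g*a03],[g*a10,g*a11,g*a12,g*a13],[g*a20,g*a21,g*a22,g*a23],[g*a30,g*a31,g*a32,g*a33]]"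
  by (rule eq_matI) (auto simp: mat_of_rows_list_def eval_nat_numeral less_Suc_eq)

lemma kron2: "kron (mat_of_rows_list 2 [[a00,a01],[a10,a11]]) (mat_of_rows_list 2 [[b00,b01],[b10,b11]]) = mat_of_rows_list 4 [[a00*b00,a00*b01,a01*b00,a01*b01],[a00*b10,a00*b11,a01*b10,a01*b11],[a10*b00,a10*b01,a11*b00,a11*b01],[a10*b10,a10*b11,a11*b10,a11*b11]]"
proof (rule eq_matI)
  fix i j assume "i < dim_row (mat_of_rows_list 4 [[a00*b00,a00*b01,a01*b00,a01*b01],[a00*b10,a00*b11,a01*b10,a01*b11],[a10*b00,a10*b01,a11*b00,a11*b01],[a10*b10,a10*b11,a11*b10,a11*b11]])" "j < dim_col (mat_of_rows_list 4 [[a00*b00,a00*b01,a01*b00,a01*b01],[a00*b10,a00*b11,a01*b10,a01*b11],[a10*b00,a10*b01,a11*b00,a11*b01],[a10*b10,a10*b11,a11*b10,a11*b11]])"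
  then have "i < 4" "j < 4" by (simp_all add: mat_of_rows_list_def)
  then show "kron (mat_of_rows_list 2 [[a00,a01],[a10,a11]]) (mat_of_rows_list 2 [[b00,b01],[b10,b11]]) $$ (i,j) = mat_of_rows_list 4 [[a00*b00,a00*b01,a01*b00,a01*b01],[a00*b10,a00*b11,a01*b10,a01*b11],[a10*b00,a10*b01,a11*b00,a11*b01],[a10*b10,a10*b11,a11*b10,a11*b11]] $$ (i,j)"
    using less4'[of i] less4'[of j] by (auto simp: kron_def mat_of_rows_list_def simp flip: numeral_2_eq_2)
qed (auto simp: kron_def mat_of_rows_list_def)

lemma Yexp: "mexp ((\<i> / 2 * of_real x) \<cdot>\<^sub>m sigma_y) = mat_of_rows_list 2 [[of_real (cos (x/2)), of_real (sin (x/2))],[- of_real (sin (x/2)), of_real (cos (x/2))]]"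
proof -
  have e1: "exp (\<i> * of_real x / 2) = of_real (cos (x/2)) + \<i> * of_real (sin (x/2))"
    using cis_conv_exp[of "x/2"] by (simp add: complex_eq_iff cis.sel field_simps)
  have e2: "exp (- (\<i> * of_real x / 2)) = of_real (cos (x/2)) - \<i> * of_real (sin (x/2))"
    using cis_conv_exp[of "-x/2"] by (simp add: complex_eq_iff cis.sel field_simps)
  show ?thesis
    apply (subst mexp_invol[OF sigma_y_carrier sigma_y_sq])
    apply (rule mat2_eqI)
    apply (auto simp: sigma_y_def mat_of_rows_list_def eval_nat_numeral less_Suc_eq)
    apply (simp_all add: e1 e2 field_simps)
    done
qed

lemma KK: "kron sigma_z sigma_z = mat_of_rows_list 4 [[1,0,0,0],[0,-1,0,0],[0,0,-1,0],[0,0,0,1]]"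
  unfolding sigma_z_def kron2 by simp

lemma KK_carrier: "kron sigma_z sigma_z \<in> carrier_mat 4 4"
  unfolding KK mat_of_rows_list_def by (rule carrier_matI) simp_all

lemma KK_sq: "kron sigma_z sigma_z * kron sigma_z sigma_z = 1\<^sub>m 4"
  unfolding KK mult4 by (rule eq_matI) (auto simp: mat_of_rows_list_def eval_nat_numeral less_Suc_eq)

lemma LHS: "mexp (c \<cdot>\<^sub>m kron sigma_z sigma_z) = mat_of_rows_list 4 [[exp c,0,0,0],[0,exp (-c),0,0],[0,0,exp (-c),0],[0,0,0,exp c]]"
  apply (subst mexp_invol[OF KK_carrier KK_sq])
  apply (rule eq_matI)
  apply (auto simp: KK mat_of_rows_list_def eval_nat_numeral less_Suc_eq field_simps)
  done

lemma generic:
  fixes z zi E g C S p q u v c8 s8 :: complex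
  assumes hzz: "z * zi = 1" and hw: "z^2 = u + \<i> * v" and huv: "u^2 + v^2 = 1"
    and hE: "E = z^4" and hg: "g * z^2 = 1"
    and h1: "C * v = - s8" and h2: "2*p*q*S - C*(p^2-q^2)*u = c8" and h3: "2*u*p*q*C + (p^2-q^2)*S = 0"
    and hp: "p^2 + q^2 = 1" and hi: "\<i>^2 = (-1::complex)"
  shows "mat_of_rows_list 4 [[c8 + \<i>*s8,0,0,0],[0,c8 - \<i>*s8,0,0],[0,0,c8 - \<i>*s8,0],[0,0,0,c8 + \<i>*s8]] =
    g \<cdot>\<^sub>m
    (kron (mat_of_rows_list 2 [[z,0],[0,zi]])
          (mat_of_rows_list 2 [[\<i> * p, \<i> * q], [- q, p]] * mat_of_rows_list 2 [[z,0],[0,zi]])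
     * mat_of_rows_list 4 [[1,0,0,0],[0,1,0,0],[0,0,1,0],[0,0,0,E]]
     * kron (mat_of_rows_list 2 [[z,0],[0,zi]])
            (mat_of_rows_list 2 [[C, S],[-S, C]] * mat_of_rows_list 2 [[z,0],[0,zi]])
     * mat_of_rows_list 4 [[1,0,0,0],[0,1,0,0],[0,0,1,0],[0,0,0,E]]
     * kron (mat_of_rows_list 2 [[1,0],[0,1]]) (mat_of_rows_list 2 [[\<i> * p, - q], [- \<i> * q, - p]]))"
  unfolding mult2 kron2 mult4 smult4
  apply (rule arg_cong[where f="mat_of_rows_list 4"])
  apply simp
  apply (intro conjI)
  subgoal using hzz hw huv hE hg h1 h2 h3 hp hi by (Groebner_Basis.algebra)
  subgoal using hzz hw huv hE hg h1 h2 h3 hp hi by (Groebner_Basis.algebra)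
  subgoal using hzz hw huv hE hg h1 h2 h3 hp hi by (Groebner_Basis.algebra)
  subgoal using hzz hw huv hE hg h1 h2 h3 hp hi by (Groebner_Basis.algebra)
  subgoal using hzz hw huv hE hg h1 h2 h3 hp hi by (Groebner_Basis.algebra)
  subgoal using hzz hw huv hE hg h1 h2 h3 hp hi by (Groebner_Basis.algebra)
  subgoal using hzz hw huv hE hg h1 h2 h3 hp hi by (Groebner_Basis.algebra)
  subgoal using hzz hw huv hE hg h1 h2 h3 hp hi by (Groebner_Basis.algebra)
  done

lemma real_core:
  fixes u v r tq p q k sb cb s8 c8 :: real
  assumes hr: "r^2 = 2" "r > 0" and huv: "u^2 + v^2 = 1" "v > 0" "u \<ge> 0"
    and htq: "tq * v = (r - 1) * u" and hp: "p^2 = (1 + tq)/2" "q^2 = (1 - tq)/2" "p \<ge> 0" "q \<ge> 0"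
    and hk: "k * v^2 = r/2 - u^2" and hs: "sb^2 = (1 - k)/2" "cb^2 = (1 + k)/2" "sb \<ge> 0" "cb \<ge> 0"
    and h8: "s8^2 = (2 - r)/4" "s8 > 0" "c8 * s8 = r/4"
  shows "sb * v = s8" "2*p*q*cb + sb*tq*u = c8" "tq*cb = 2*u*p*q*sb"
proof -
  have hr2: "r*r - 2 = 0" using hr(1) by (simp add: power2_eq_square)
  have hk': "2 * k * v^2 = r - 2 * u^2" using hk by simp
  have hs': "2 * sb^2 = 1 - k" "2 * cb^2 = 1 + k" using hs by simp_all
  have hp': "2 * p^2 = 1 + tq" "2 * q^2 = 1 - tq" using hp by simp_all
  have h8': "4 * s8^2 = 2 - r" "4 * c8 * s8 = r" using h8 by simp_all
  have r1: "r > 1"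
  proof (rule ccontr)
    assume "\<not> r > 1" then have "r \<le> 1" by simp
    then have "r^2 \<le> 1" using hr(2) by (simp add: power_le_one)
    then show False using hr(1) by simp
  qed
  have sq1: "(sb * v)^2 = s8^2"
    using huv(1) hk' hs'(1) h8'(1) by (Groebner_Basis.algebra)
  show e1: "sb * v = s8"
    using sq1 hs(3) huv(2) h8(2) by (simp add: power2_eq_iff_nonneg)
  have sqK: "(2*p*q*s8)^2 = ((r-1)*cb)^2"
    using hr2 huv(1) htq hp' hk' hs' h8'(1) by (Groebner_Basis.algebra)
  have K: "2*p*q*s8 = (r-1)*cb"
    using sqK hp(3,4) h8(2) hs(4) r1 by (simp add: power2_eq_iff_nonneg)
  have "s8 * v * (tq*cb - 2*u*p*q*sb) = 0"
    using K e1 htq by (Groebner_Basis.algebra)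
  then show "tq*cb = 2*u*p*q*sb" using h8(2) huv(2) by simp
  have "s8 * v^2 * (2*p*q*cb + sb*tq*u - c8) = 0"
    using K e1 htq hr2 huv(1) hk' hs' h8' by (Groebner_Basis.algebra)
  then show "2*p*q*cb + sb*tq*u = c8" using h8(2) huv(2) by simp
qed

theorem mainTheorem9:
  fixes \<phi> :: real
  assumes "pi / 2 \<le> \<phi>" and "\<phi> \<le> pi"
  shows "mexp ((of_real (pi / 4) * \<i> / 2) \<cdot>\<^sub>m kron sigma_z sigma_z) =
    exp (- \<i> * of_real (\<phi> / 2)) \<cdot>\<^sub>m
    (kron (mexp ((\<i> * of_real (\<phi> / 4)) \<cdot>\<^sub>m sigma_z))
          (U1 \<phi> * mexp ((\<i> * of_real (\<phi> / 4)) \<cdot>\<^sub>m sigma_z))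
     * Cphi \<phi>
     * kron (mexp ((\<i> * of_real (\<phi> / 4)) \<cdot>\<^sub>m sigma_z))
            (mexp ((\<i> / 2 * of_real (bpar \<phi> + pi)) \<cdot>\<^sub>m sigma_y)
             * mexp ((\<i> * of_real (\<phi> / 4)) \<cdot>\<^sub>m sigma_z))
     * Cphi \<phi>
     * kron Id2 (U2 \<phi>))"
proof -
  define x where "x = \<phi> / 2"
  define u where "u = cos x"
  define v where "v = sin x"
  define r where "r = sqrt (2::real)"
  define k where "k = (1 / sqrt 2 - (cos (\<phi> / 2))\<^sup>2) / (sin (\<phi> / 2))\<^sup>2"
  define b where "b = bpar \<phi>"
  define sb where "sb = sin (b/2)"
  define cb where "cb = cos (b/2)"
  define s8 where "s8 = sin (pi/8)"
  define c8 where "c8 = cos (pi/8)"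
  define tq' where "tq' = tq \<phi>"
  define p where "p = ppar \<phi>"
  define q where "q = qpar \<phi>"
  have x1: "pi/4 \<le> x" "x \<le> pi/2" using assms by (auto simp: x_def)
  have hr: "r^2 = 2" "r > 0" by (auto simp: r_def)
  have r2: "r < 2" unfolding r_def by (rule real_less_lsqrt) auto
  have r1: "1 < r" unfolding r_def by (rule real_less_rsqrt) auto
  have huv: "u^2 + v^2 = 1" by (simp add: u_def v_def add.commute)
  have x2: "0 < x" "x < pi" using x1 pi_gt_zero by linarith+
  have v0: "v > 0" unfolding v_def using x2 by (intro sin_gt_zero)
  have u0: "u \<ge> 0" unfolding u_def using x1 by (intro cos_ge_zero) auto
  have cphi: "cos \<phi> \<le> 0"
  proof -
    have "0 \<le> cos (pi - \<phi>)" using assms by (intro cos_ge_zero) auto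
    then show ?thesis by simp
  qed
  have "cos \<phi> = u^2 - v^2" unfolding u_def v_def x_def using cos_double[of "\<phi>/2"] by simp
  then have uv2: "u^2 \<le> v^2" using cphi by simp
  have uv: "u \<le> v" using uv2 u0 v0 by (simp add: power2_le_iff_abs_le)
  have htq: "tq' * v = (r - 1) * u"
  proof (cases "\<phi> = pi")
    case True
    then have "u = 0" by (simp add: u_def x_def)
    then show ?thesis using True by (simp add: tq'_def tq_def)
  next
    case False
    then show ?thesis using v0 by (simp add: tq'_def tq_def tan_def u_def v_def x_def r_def field_simps)
  qed
  have tq0: "tq' \<ge> 0"
  proof -
    have "tq' * v \<ge> 0" using htq r1 u0 by simp
    then show ?thesis using v0 by (simp add: zero_le_mult_iff)
  qed
  have tq1: "tq' \<le> 1"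
  proof -
    have "(r - 1) * u \<le> 1 * u" using r2 u0 by (intro mult_right_mono) auto
    then have "tq' * v \<le> 1 * v" using htq uv by simp
    then show ?thesis using v0 by simp
  qed
  have hp: "p^2 = (1 + tq')/2" "q^2 = (1 - tq')/2" "p \<ge> 0" "q \<ge> 0"
    using tq0 tq1 by (auto simp: p_def q_def ppar_def qpar_def tq'_def[symmetric])
  have kv: "k * v^2 = r/2 - u^2"
    using v0 by (simp add: k_def u_def v_def x_def r_def field_simps real_sqrt_divide)
  have k1: "k \<le> 1"
  proof -
    have "k * v^2 \<le> 1 * v^2" using kv r2 huv by simp
    then show ?thesis using v0 by simp
  qed
  have k2: "-1 \<le> k"
  proof -
    have "(-1) * v^2 \<le> k * v^2" using kv r1 uv2 by simp
    moreover have "0 < v^2" using v0 by simp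
    ultimately show ?thesis using mult_le_cancel_right_pos[of "v^2" "-1" k] by simp
  qed
  have bk: "cos b = k" using k1 k2 by (simp add: b_def bpar_def k_def)
  have b0: "0 \<le> b" "b \<le> pi" using k1 k2 arccos_lbound arccos_ubound by (auto simp: b_def bpar_def k_def)
  have hs: "sb^2 = (1 - k)/2" "cb^2 = (1 + k)/2"
    using cos_double_sin[of "b/2"] cos_double_cos[of "b/2"] bk by (auto simp: sb_def cb_def)
  have hs2: "sb \<ge> 0" "cb \<ge> 0" unfolding sb_def cb_def using b0
    by (auto intro!: sin_ge_zero cos_ge_zero)
  have h8: "s8^2 = (2 - r)/4" "s8 > 0" "c8 * s8 = r/4"
  proof -
    show "s8^2 = (2 - r)/4" using cos_double_sin[of "pi/8"] cos_45 by (simp add: s8_def r_def)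
    show "s8 > 0" unfolding s8_def by (rule sin_gt_zero) auto
    show "c8 * s8 = r/4" using sin_double[of "pi/8"] sin_45 by (simp add: s8_def c8_def r_def)
  qed
  note core = real_core[OF hr huv v0 u0 htq hp kv hs hs2 h8]
  have euler: "exp (\<i> * of_real a) = of_real (cos a) + \<i> * of_real (sin a)" for a
    using cis_conv_exp[of a] by (simp add: complex_eq_iff)
  have eL1: "exp (of_real (pi / 4) * \<i> / 2) = of_real c8 + \<i> * of_real s8"
  proof -
    have "exp (of_real (pi / 4) * \<i> / 2) = exp (\<i> * of_real (pi/8))" by (rule arg_cong[where f=exp]) simp
    then show ?thesis using euler[of "pi/8"] by (simp only: c8_def s8_def)
  qed
  have eL2: "exp (- (of_real (pi / 4) * \<i> / 2)) = of_real c8 - \<i> * of_real s8"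
  proof -
    have "exp (- (of_real (pi / 4) * \<i> / 2)) = exp (\<i> * of_real (-(pi/8)))" by (rule arg_cong[where f=exp]) simp
    then show ?thesis using euler[of "-(pi/8)"] by (simp only: c8_def s8_def cos_minus sin_minus of_real_minus) simp
  qed
  let ?z = "exp (\<i> * complex_of_real (\<phi> / 4))"
  let ?zi = "exp (- (\<i> * complex_of_real (\<phi> / 4)))"
  have hzz: "?z * ?zi = 1" by (simp add: exp_minus)
  have z2: "?z ^ 2 = exp (\<i> * of_real (\<phi>/2))"
  proof -
    have "?z ^ 2 = exp (of_nat 2 * (\<i> * complex_of_real (\<phi> / 4)))" by (rule exp_of_nat_mult[symmetric])
    also have "of_nat 2 * (\<i> * complex_of_real (\<phi> / 4)) = \<i> * of_real (\<phi>/2)" by simp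
    finally show ?thesis .
  qed
  have z4: "?z ^ 4 = exp (\<i> * of_real \<phi>)"
  proof -
    have "?z ^ 4 = exp (of_nat 4 * (\<i> * complex_of_real (\<phi> / 4)))" by (rule exp_of_nat_mult[symmetric])
    also have "of_nat 4 * (\<i> * complex_of_real (\<phi> / 4)) = \<i> * of_real \<phi>" by simp
    finally show ?thesis .
  qed
  have hw: "?z ^ 2 = of_real u + \<i> * of_real v"
  proof -
    have "?z ^ 2 = exp (\<i> * of_real (\<phi>/2))" by (rule z2)
    also have "\<dots> = of_real u + \<i> * of_real v" by (simp only: euler u_def v_def x_def)
    finally show ?thesis .
  qed
  have hg: "exp (- \<i> * of_real (\<phi> / 2)) * ?z ^ 2 = 1" unfolding z2 by (simp add: exp_minus)
  have huvc: "(complex_of_real u)^2 + (complex_of_real v)^2 = 1"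
  proof -
    have "complex_of_real (u^2 + v^2) = 1" using huv by simp
    then show ?thesis by simp
  qed
  have Ccos: "cos ((bpar \<phi> + pi) / 2) = - sb" and Csin: "sin ((bpar \<phi> + pi) / 2) = cb"
    by (simp_all add: sb_def cb_def b_def add_divide_distrib cos_add sin_add)
  have pq: "p^2 - q^2 = tq'" using hp(1,2) by (simp add: field_simps)
  have h1r: "cos ((bpar \<phi> + pi) / 2) * v = - s8" using core(1) Ccos by simp
  have h2r: "2*p*q*sin ((bpar \<phi> + pi) / 2) - cos ((bpar \<phi> + pi) / 2) * (p^2 - q^2) * u = c8"
  proof -
    have "2*p*q*sin ((bpar \<phi> + pi) / 2) - cos ((bpar \<phi> + pi) / 2) * (p^2 - q^2) * u = 2*p*q*cb + sb*tq'*u"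
      unfolding Ccos Csin pq by (simp add: algebra_simps)
    then show ?thesis using core(2) by simp
  qed
  have h3r: "2*u*p*q*cos ((bpar \<phi> + pi) / 2) + (p^2 - q^2) * sin ((bpar \<phi> + pi) / 2) = 0"
    using core(3) unfolding Ccos Csin pq by (simp add: algebra_simps)
  have hpr: "p^2 + q^2 = 1" using hp(1,2) by (simp add: field_simps)
  have h1c: "complex_of_real (cos ((bpar \<phi> + pi) / 2)) * complex_of_real v = - complex_of_real s8"
  proof -
    have "complex_of_real (cos ((bpar \<phi> + pi) / 2) * v) = complex_of_real (- s8)" using h1r by simp
    then show ?thesis by simp
  qed
  have h2c: "2 * complex_of_real p * complex_of_real q * complex_of_real (sin ((bpar \<phi> + pi) / 2))
     - complex_of_real (cos ((bpar \<phi> + pi) / 2)) * ((complex_of_real p)^2 - (complex_of_real q)^2) * complex_of_real u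
     = complex_of_real c8"
  proof -
    have "complex_of_real (2*p*q*sin ((bpar \<phi> + pi) / 2) - cos ((bpar \<phi> + pi) / 2) * (p^2 - q^2) * u) = complex_of_real c8"
      using h2r by simp
    then show ?thesis by simp
  qed
  have h3c: "2 * complex_of_real u * complex_of_real p * complex_of_real q * complex_of_real (cos ((bpar \<phi> + pi) / 2))
     + ((complex_of_real p)^2 - (complex_of_real q)^2) * complex_of_real (sin ((bpar \<phi> + pi) / 2)) = 0"
  proof -
    have "complex_of_real (2*u*p*q*cos ((bpar \<phi> + pi) / 2) + (p^2 - q^2) * sin ((bpar \<phi> + pi) / 2)) = 0"
      using h3r by simp
    then show ?thesis by simp
  qed
  have hpc: "(complex_of_real p)^2 + (complex_of_real q)^2 = 1"
  proof -
    have "complex_of_real (p^2 + q^2) = 1" using hpr by simp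
    then show ?thesis by simp
  qed
  show ?thesis
    unfolding LHS Zexp Yexp U1_def U2_def Cphi_def Id2_def eL1 eL2 p_def[symmetric] q_def[symmetric]
    apply (rule generic[where u = "complex_of_real u" and v = "complex_of_real v"])
    using hzz hw huvc z4 hg h1c h2c h3c hpc by simp_all

qed

end
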